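(* In $X=(\mathbb{R}^2,\|\cdot\|_\infty)$ let $A=\{(x,y):x>0,\ y\ge1/x\}$, $B=B_1\cup B_2$ with $B_1=\{(x,y):x>-1,\ y\le\frac{1}{x+1}-1\}$ and $B_2=\{(x,y):x\le-1,\ y\in\mathbb{R}\}$, and let $\overline{A}=\{(x,y):x>0,\ y=1/x\}$ and $\overline{B}=\{(x,y):x>-1,\ y=\frac{1}{x+1}-1\}$. Define $T:A\cup B\to\mathbb{R}^2$ by $$Tz=\left(-\tfrac{d(z,\overline{A})}{2},-\tfrac{d(z,\overline{A})}{2}\right)\ \text{for }z\in A,\qquad Tz=\left(1+\tfrac{d(z,\overline{B})}{2},1+\tfrac{d(z,\overline{B})}{2}\right)\ \text{for }z\in B.$$ Then $\mathrm{dist}(A,B)=1$, $T(A)\subseteq B$, $T(B)\subseteq A$, and $$\|Ta-Tb\|_\infty\le\tfrac12\|a-b\|_\infty+\tfrac12\,\mathrm{dist}(A,B)\quad\text{for all }a\in A,\ b\in B.$$ Consequently $T$ has a unique best proximity point in $A$, even though the ordered pair $(A,B)$ does not have the $UC$ property.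
   Context: $\|(x,y)\|_\infty=\max\{|x|,|y|\}$; $d(z,S)=\inf\{\|z-s\|_\infty:s\in S\}$; $\mathrm{dist}(A,B)=\inf\{\|a-b\|_\infty:a\in A,b\in B\}$. A point $x\in A$ is a best proximity point of $T$ in $A$ if $\|x-Tx\|_\infty=\mathrm{dist}(A,B)$. The ordered pair $(A,B)$ has the $UC$ property if for all sequences $\{x_n\},\{z_n\}\subset A$, $\{y_n\}\subset B$ with $\lim_n\|x_n-y_n\|_\infty=\lim_n\|z_n-y_n\|_\infty=\mathrm{dist}(A,B)$ one has $\lim_n\|x_n-z_n\|_\infty=0$. *)

theory Defs
  imports "HOL-Analysis.Analysis"
begin

text \<open>Points of R^2 are pairs; the norm is the max (sup) norm, defined explicitly
  (the library norm on real \<times> real is the Euclidean one).\<close>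

definition normInf :: "real \<times> real \<Rightarrow> real" where
  "normInf z = max \<bar>fst z\<bar> \<bar>snd z\<bar>"

definition dpt :: "real \<times> real \<Rightarrow> (real \<times> real) set \<Rightarrow> real" where
  "dpt z S = (INF s\<in>S. normInf (z - s))"

definition distSet :: "(real \<times> real) set \<Rightarrow> (real \<times> real) set \<Rightarrow> real" where
  "distSet A B = (INF p\<in>A \<times> B. normInf (fst p - snd p))"

definition best_proximity_point ::
  "(real \<times> real) set \<Rightarrow> (real \<times> real) set \<Rightarrow> (real \<times> real \<Rightarrow> real \<times> real) \<Rightarrow> real \<times> real \<Rightarrow> bool" where
  "best_proximity_point A B T x \<longleftrightarrow> x \<in> A \<and> normInf (x - T x) = distSet A B"

definition UC_property :: "(real \<times> real) set \<Rightarrow> (real \<times> real) set \<Rightarrow> bool" where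
  "UC_property A B \<longleftrightarrow>
     (\<forall>xs zs ys. (\<forall>n. xs n \<in> A) \<longrightarrow> (\<forall>n. zs n \<in> A) \<longrightarrow> (\<forall>n. ys n \<in> B) \<longrightarrow>
        (\<lambda>n. normInf (xs n - ys n)) \<longlonglongrightarrow> distSet A B \<longrightarrow>
        (\<lambda>n. normInf (zs n - ys n)) \<longlonglongrightarrow> distSet A B \<longrightarrow>
        (\<lambda>n. normInf (xs n - zs n)) \<longlonglongrightarrow> 0)"

definition exA :: "(real \<times> real) set" where
  "exA = {(x, y). x > 0 \<and> y \<ge> 1 / x}"

definition exB1 :: "(real \<times> real) set" where
  "exB1 = {(x, y). x > -1 \<and> y \<le> 1 / (x + 1) - 1}"

definition exB2 :: "(real \<times> real) set" where
  "exB2 = {(x, y). x \<le> -1}"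

definition exB :: "(real \<times> real) set" where
  "exB = exB1 \<union> exB2"

definition exAbar :: "(real \<times> real) set" where
  "exAbar = {(x, y). x > 0 \<and> y = 1 / x}"

definition exBbar :: "(real \<times> real) set" where
  "exBbar = {(x, y). x > -1 \<and> y = 1 / (x + 1) - 1}"

text \<open>T on A \<union> B (A and B are disjoint); values outside A \<union> B are irrelevant.\<close>
definition exT :: "real \<times> real \<Rightarrow> real \<times> real" where
  "exT z = (if z \<in> exA then (- dpt z exAbar / 2, - dpt z exAbar / 2)
            else (1 + dpt z exBbar / 2, 1 + dpt z exBbar / 2))"

end

theory Submission
  imports Defs
begin

lemma normInf_nonneg: "normInf z \<ge> 0"
  by (simp add: normInf_def)

lemma normInf_pair: "normInf (x, y) = max \<bar>x\<bar> \<bar>y\<bar>"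
  by (simp add: normInf_def)

lemma dpt_nonneg: "S \<noteq> {} \<Longrightarrow> dpt z S \<ge> 0"
  unfolding dpt_def by (rule cINF_greatest) (auto simp: normInf_nonneg)

lemma dpt_le: "s \<in> S \<Longrightarrow> dpt z S \<le> normInf (z - s)"
  unfolding dpt_def by (rule cINF_lower) (auto intro!: bdd_belowI[where m=0] simp: normInf_nonneg)

lemma exAbar_ne: "exAbar \<noteq> {}"
  proof -
  have "(1,1) \<in> exAbar" by (simp add: exAbar_def)
  thus ?thesis by blast
qed

lemma exBbar_ne: "exBbar \<noteq> {}"
  proof -
  have "(0,0) \<in> exBbar" by (simp add: exBbar_def)
  thus ?thesis by blast
qed

lemma A_point:
  assumes "(a1, a2) \<in> exA"
  shows "\<exists>s p. s \<ge> 0 \<and> p > 0 \<and> a1 = p + s \<and> a2 = 1/p + s"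
proof -
  from assms have a1: "a1 > 0" and a2: "a2 \<ge> 1/a1" by (auto simp: exA_def)
  have prod: "a1 * a2 \<ge> 1" using a1 a2 by (simp add: field_simps)
  define D where "D = sqrt ((a1-a2)^2 + 4)"
  have D2: "D^2 = (a1-a2)^2 + 4" unfolding D_def by simp
  have "sqrt ((a1-a2)^2) < sqrt ((a1-a2)^2 + 4)" by (rule real_sqrt_less_mono) simp
  hence Dge: "D > \<bar>a1 - a2\<bar>" unfolding D_def by simp
  define s where "s = (a1 + a2 - D)/2"
  define p where "p = (a1 - a2 + D)/2"
  have "(a1 - a2 + D)/2 > 0" using le_less_trans[OF abs_ge_minus_self[of "a1-a2"] Dge] by simp
  hence p: "p > 0" by (simp add: p_def)
  have q: "(a2 - a1 + D)/2 > 0" using le_less_trans[OF abs_ge_self[of "a1-a2"] Dge] by simp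
  have "p * ((a2 - a1 + D)/2) = 1" unfolding p_def using D2 by (simp add: algebra_simps power2_eq_square)
  hence e: "(a2 - a1 + D)/2 = 1/p" using p by (simp add: field_simps)
  have "1/a1 > 0" using a1 by simp
  hence pos: "a1 + a2 \<ge> 0" using a1 a2 by linarith
  have "D \<le> sqrt ((a1+a2)^2)" unfolding D_def
    by (rule real_sqrt_le_mono) (use prod in \<open>simp add: algebra_simps power2_eq_square\<close>)
  hence "D \<le> a1 + a2" using pos by simp
  hence "s \<ge> 0" unfolding s_def by simp
  moreover have "a1 = p + s" unfolding p_def s_def by (simp add: field_simps)
  moreover have "a2 = (a2 - a1 + D)/2 + s" unfolding s_def by (simp add: field_simps)
  hence "a2 = 1/p + s" using e by simp
  ultimately show ?thesis using p by blast
qed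

lemma B_point:
  assumes "(b1, b2) \<in> exB"
  shows "\<exists>t q. t \<ge> 0 \<and> q > 0 \<and> b1 = q - 1 - t \<and> b2 = 1/q - 1 - t"
proof -
  define c1 where "c1 = b1 + 1"
  define c2 where "c2 = b2 + 1"
  have cc: "c1 + c2 > 0 \<Longrightarrow> c1 * c2 \<le> 1"
  proof -
    assume h: "c1 + c2 > 0"
    show "c1 * c2 \<le> 1"
    proof (cases "b1 \<le> -1")
      case True
      hence "c1 \<le> 0" "c2 > 0" using h by (auto simp: c1_def)
      thus ?thesis using mult_nonpos_nonneg[of c1 c2] by linarith
    next
      case False
      with assms have "b2 \<le> 1/(b1+1) - 1" by (auto simp: exB_def exB1_def exB2_def)
      hence "c2 \<le> 1/c1" "c1 > 0" using False by (auto simp: c1_def c2_def)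
      thus ?thesis by (simp add: field_simps)
    qed
  qed
  define D where "D = sqrt ((c1-c2)^2 + 4)"
  have D2: "D^2 = (c1-c2)^2 + 4" unfolding D_def by simp
  have "sqrt ((c1-c2)^2) < sqrt ((c1-c2)^2 + 4)" by (rule real_sqrt_less_mono) simp
  hence Dge: "D > \<bar>c1 - c2\<bar>" unfolding D_def by simp
  define t where "t = (D - c1 - c2)/2"
  define q where "q = (c1 - c2 + D)/2"
  have "(c1 - c2 + D)/2 > 0" using le_less_trans[OF abs_ge_minus_self[of "c1-c2"] Dge] by simp
  hence q: "q > 0" by (simp add: q_def)
  have "q * ((c2 - c1 + D)/2) = 1" unfolding q_def using D2 by (simp add: algebra_simps power2_eq_square)
  hence e: "(c2 - c1 + D)/2 = 1/q" using q by (simp add: field_simps)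
  have "c1 + c2 \<le> D"
  proof (cases "c1 + c2 > 0")
    case True
    have "D \<ge> sqrt ((c1+c2)^2)" unfolding D_def
      by (rule real_sqrt_le_mono) (use cc[OF True] in \<open>simp add: algebra_simps power2_eq_square\<close>)
    thus ?thesis using True by simp
  next
    case False
    have "D \<ge> 0" unfolding D_def by simp
    thus ?thesis using False by linarith
  qed
  hence "t \<ge> 0" unfolding t_def by simp
  moreover have "b1 = q - 1 - t" unfolding q_def t_def c1_def by (simp add: field_simps)
  moreover have "b2 = (c2 - c1 + D)/2 - 1 - t" unfolding t_def c2_def by (simp add: field_simps)
  hence "b2 = 1/q - 1 - t" using e by simp
  ultimately show ?thesis using q by blast
qed

lemma key:
  assumes "a \<in> exA" "b \<in> exB"
  shows "dpt a exAbar + dpt b exBbar + 1 \<le> normInf (a - b)"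
proof -
  obtain a1 a2 b1 b2 where ab: "a = (a1,a2)" "b = (b1,b2)" by fastforce
  obtain s p where sp: "s \<ge> 0" "p > 0" "a1 = p + s" "a2 = 1/p + s"
    using A_point assms ab by blast
  obtain t q where tq: "t \<ge> 0" "q > 0" "b1 = q - 1 - t" "b2 = 1/q - 1 - t"
    using B_point assms ab by blast
  have "(p, 1/p) \<in> exAbar" using sp by (simp add: exAbar_def)
  from dpt_le[OF this, of a] have d1: "dpt a exAbar \<le> s" using sp ab
    by (simp add: normInf_pair)
  have "(q - 1, 1/q - 1) \<in> exBbar" using tq by (simp add: exBbar_def)
  from dpt_le[OF this, of b] have d2: "dpt b exBbar \<le> t" using tq ab
    by (simp add: normInf_pair)
  have "1 + s + t \<le> normInf (a - b)"
  proof (cases "p \<ge> q")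
    case True
    thus ?thesis using sp tq ab by (simp add: normInf_pair)
  next
    case False
    hence "1/p > 1/q" using sp tq by (simp add: frac_less2)
    thus ?thesis using sp tq ab by (simp add: normInf_pair)
  qed
  thus ?thesis using d1 d2 by simp
qed


lemma AB_disj: "z \<in> exB \<Longrightarrow> z \<notin> exA"
proof
  assume "z \<in> exB" "z \<in> exA"
  obtain x y where z: "z = (x,y)" by fastforce
  from \<open>z \<in> exA\<close> have x: "x > 0" and y: "y \<ge> 1/x" by (auto simp: z exA_def)
  have "1/x > 0" using x by simp
  hence y0: "y > 0" using y by linarith
  from \<open>z \<in> exB\<close> x have "y \<le> 1/(x+1) - 1" by (auto simp: z exB_def exB1_def exB2_def)
  moreover have "1/(x+1) \<le> 1" using x by (simp add: field_simps)
  ultimately show False using y0 by linarith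
qed

lemma distAB: "distSet exA exB = 1"
proof -
  have ne: "exA \<times> exB \<noteq> {}"
  proof -
    have "((1,1),(0,0)) \<in> exA \<times> exB" by (simp add: exA_def exB_def exB1_def)
    thus ?thesis by blast
  qed
  have "1 \<le> distSet exA exB" unfolding distSet_def
  proof (rule cINF_greatest[OF ne])
    fix x assume "x \<in> exA \<times> exB"
    hence "fst x \<in> exA" "snd x \<in> exB" by auto
    thus "1 \<le> normInf (fst x - snd x)"
      using key[of "fst x" "snd x"] dpt_nonneg[OF exAbar_ne, of "fst x"] dpt_nonneg[OF exBbar_ne, of "snd x"]
      by linarith
  qed
  moreover have "distSet exA exB \<le> 1" unfolding distSet_def
  proof -
    show "(INF p\<in>exA \<times> exB. normInf (fst p - snd p)) \<le> 1"
      by (rule cINF_lower2[where x="((1,1),(0,0))"])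
         (auto intro!: bdd_belowI[where m=0] simp: normInf_nonneg normInf_pair exA_def exB_def exB1_def)
  qed
  ultimately show ?thesis by simp
qed

lemma TA: "z \<in> exA \<Longrightarrow> exT z \<in> exB"
proof -
  assume z: "z \<in> exA"
  define d where "d = dpt z exAbar"
  have d: "d \<ge> 0" unfolding d_def by (rule dpt_nonneg[OF exAbar_ne])
  have T: "exT z = (-d/2, -d/2)" using z by (simp add: exT_def d_def)
  show ?thesis
  proof (cases "-d/2 \<le> -1")
    case True thus ?thesis by (simp add: T exB_def exB2_def)
  next
    case False
    hence "1/(1-d/2) \<ge> 1" using d by (simp add: field_simps)
    hence "-(d/2) \<le> 1/(1-d/2) - 1" using d by linarith
    thus ?thesis using False d by (simp add: T exB_def exB1_def)
  qed
qed

lemma TB: "z \<in> exB \<Longrightarrow> exT z \<in> exA"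
proof -
  assume z: "z \<in> exB"
  define e where "e = dpt z exBbar"
  have e: "e \<ge> 0" unfolding e_def by (rule dpt_nonneg[OF exBbar_ne])
  have T: "exT z = (1 + e/2, 1 + e/2)" using z AB_disj by (simp add: exT_def e_def)
  have "1/(1+e/2) \<le> 1" using e by (simp add: field_simps)
  hence "1/(1+e/2) \<le> 1 + e/2" using e by linarith
  thus ?thesis using e by (simp add: T exA_def)
qed

lemma contr:
  assumes a: "a \<in> exA" and b: "b \<in> exB"
  shows "normInf (exT a - exT b) \<le> 1/2 * normInf (a - b) + 1/2 * distSet exA exB"
proof -
  define d where "d = dpt a exAbar"
  define e where "e = dpt b exBbar"
  have d: "d \<ge> 0" unfolding d_def by (rule dpt_nonneg[OF exAbar_ne])
  have e: "e \<ge> 0" unfolding e_def by (rule dpt_nonneg[OF exBbar_ne])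
  have Ta: "exT a = (-d/2, -d/2)" using a by (simp add: exT_def d_def)
  have Tb: "exT b = (1 + e/2, 1 + e/2)" using b AB_disj by (simp add: exT_def e_def)
  have "normInf (exT a - exT b) = 1 + d/2 + e/2" using d e by (simp add: Ta Tb normInf_pair)
  moreover have "d + e + 1 \<le> normInf (a - b)" using key[OF a b] by (simp add: d_def e_def)
  ultimately show ?thesis by (simp add: distAB)
qed

lemma bpp: "best_proximity_point exA exB exT x \<longleftrightarrow> x = (1,1)"
proof
  assume h: "best_proximity_point exA exB exT x"
  obtain x1 x2 where x: "x = (x1,x2)" by fastforce
  have xA: "x \<in> exA" and eq: "normInf (x - exT x) = 1"
    using h by (auto simp: best_proximity_point_def distAB)
  define d where "d = dpt x exAbar"
  have d: "d \<ge> 0" unfolding d_def by (rule dpt_nonneg[OF exAbar_ne])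
  have T: "exT x = (-d/2, -d/2)" using xA by (simp add: exT_def d_def)
  have x1: "x1 > 0" and x2: "x2 \<ge> 1/x1" using xA x by (auto simp: exA_def)
  have "1/x1 > 0" using x1 by simp
  hence x2p: "x2 > 0" using x2 by linarith
  have "x - exT x = (x1 + d/2, x2 + d/2)" unfolding T by (simp add: x)
  hence "max (x1 + d/2) (x2 + d/2) = 1" using eq x1 x2p d by (simp add: normInf_pair)
  hence le: "x1 \<le> 1" "x2 \<le> 1" using d by auto
  have prod: "x1 * x2 \<ge> 1" using x1 x2 by (simp add: field_simps)
  have "x1 * x2 \<le> x1 * 1" using le x1 by (intro mult_left_mono) auto
  hence "x1 = 1" using le prod by linarith
  moreover have "x1 * x2 \<le> 1 * x2" using le x2p by (intro mult_right_mono) auto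
  hence "x2 = 1" using le prod by linarith
  ultimately show "x = (1,1)" by (simp add: x)
next
  assume x: "x = (1,1)"
  have xA: "x \<in> exA" by (simp add: x exA_def)
  have "(1,1) \<in> exAbar" by (simp add: exAbar_def)
  from dpt_le[OF this, of x] have "dpt x exAbar \<le> 0" by (simp add: x normInf_def)
  hence "dpt x exAbar = 0" using dpt_nonneg[OF exAbar_ne, of x] by simp
  hence "exT x = (0,0)" using xA by (simp add: exT_def)
  thus "best_proximity_point exA exB exT x"
    using xA by (simp add: best_proximity_point_def distAB x normInf_pair)
qed

lemma notUC: "\<not> UC_property exA exB"
proof
  assume uc: "UC_property exA exB"
  define xs where "xs = (\<lambda>n::nat. (real n + 3, 1 / (real n + 3)))"
  define zs where "zs = (\<lambda>n::nat. (real n + 1, 1 / (real n + 1)))"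
  define ys where "ys = (\<lambda>n::nat. (real n + 2, -1::real))"
  have xA: "\<forall>n. xs n \<in> exA" by (simp add: xs_def exA_def)
  have zA: "\<forall>n. zs n \<in> exA" by (simp add: zs_def exA_def)
  have yB: "\<forall>n. ys n \<in> exB" by (simp add: ys_def exB_def exB1_def)
  have "(\<lambda>n::nat. 1 / (real n + 3)) \<longlonglongrightarrow> 0"
    using LIMSEQ_ignore_initial_segment[OF lim_inverse_n', of 3]
    by (simp add: add.commute inverse_eq_divide)
  hence l1: "(\<lambda>n. 1 + 1 / (real n + 3)) \<longlonglongrightarrow> 1"
    using tendsto_add[OF tendsto_const[of "1::real"]] by fastforce
  have "(\<lambda>n::nat. 1 / (real n + 1)) \<longlonglongrightarrow> 0"
    using LIMSEQ_ignore_initial_segment[OF lim_inverse_n', of 1]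
    by (simp add: add.commute inverse_eq_divide)
  hence l2: "(\<lambda>n. 1 + 1 / (real n + 1)) \<longlonglongrightarrow> 1"
    using tendsto_add[OF tendsto_const[of "1::real"]] by fastforce
  have e1: "(\<lambda>n. normInf (xs n - ys n)) = (\<lambda>n. 1 + 1 / (real n + 3))"
    by (rule ext) (simp add: xs_def ys_def normInf_pair)
  have e2: "(\<lambda>n. normInf (zs n - ys n)) = (\<lambda>n. 1 + 1 / (real n + 1))"
    by (rule ext) (simp add: zs_def ys_def normInf_pair)
  have e3: "(\<lambda>n. normInf (xs n - zs n)) = (\<lambda>n. 2)"
  proof (rule ext)
    fix n :: nat
    have "1 / (real n + 3) \<le> 1" "1 / (real n + 1) \<le> 1" by (simp_all add: field_simps)
    moreover have "1 / (real n + 3) \<ge> 0" "1 / (real n + 1) \<ge> 0" by simp_all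
    ultimately have "\<bar>1 / (real n + 3) - 1 / (real n + 1)\<bar> \<le> 2" unfolding abs_le_iff by linarith
    thus "normInf (xs n - zs n) = 2"
      by (simp add: xs_def zs_def normInf_pair)
  qed
  have "(\<lambda>n. normInf (xs n - zs n)) \<longlonglongrightarrow> 0"
    by (rule uc[unfolded UC_property_def, rule_format, of xs zs ys])
       (use xA zA yB l1 l2 in \<open>simp_all add: e1 e2 distAB\<close>)
  hence "(\<lambda>n::nat. 2::real) \<longlonglongrightarrow> 0" by (simp add: e3)
  moreover have "(\<lambda>n::nat. 2::real) \<longlonglongrightarrow> 2" by simp
  ultimately show False using LIMSEQ_unique by fastforce
qed

theorem mainTheorem17:
  shows "distSet exA exB = 1
    \<and> exT ` exA \<subseteq> exB
    \<and> exT ` exB \<subseteq> exA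
    \<and> (\<forall>a\<in>exA. \<forall>b\<in>exB.
          normInf (exT a - exT b) \<le> 1/2 * normInf (a - b) + 1/2 * distSet exA exB)
    \<and> (\<exists>!x. best_proximity_point exA exB exT x)
    \<and> \<not> UC_property exA exB"
proof -
  have "\<exists>!x. best_proximity_point exA exB exT x" unfolding bpp by simp
  moreover have "exT ` exA \<subseteq> exB" using TA by blast
  moreover have "exT ` exB \<subseteq> exA" using TB by blast
  ultimately show ?thesis using distAB contr notUC by simp
qed

end
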